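(* Let $X$ be a space possessing a binary normal closed subbase $\mathcal S$. Then every $\mathcal S$-convex $\mathcal S$-open continuous surjection $f\colon X\to Y$ is invertible: for every space $Z$ and every continuous map $g\colon Z\to Y$ there exists a continuous map $h\colon Z\to X$ with $f\circ h=g$.
   Context: All spaces are Tychonoff and maps continuous. A family $\mathcal S$ of closed subsets of $X$ is a closed subbase if every closed set is an intersection of finite unions of members of $\mathcal S$. A family is linked if any two members intersect; $\mathcal S$ is binary if every linked subfamily has nonempty intersection. $\mathcal S$ is normal if for every disjoint $S_0,S_1\in\mathcal S$ there exist $T_0,T_1\in\mathcal S$ with $S_0\cap T_1=\varnothing=T_0\cap S_1$ and $T_0\cup T_1=X$. For $B\subset X$, $I_{\mathcal S}(B)=\bigcap\{S\in\mathcal S:B\subset S\}$; $B$ is $\mathcal S$-convex if $I_{\mathcal S}(\{x,y\})\subset B$ for all $x,y\in B$. A map $f\colon X\to Y$ is $\mathcal S$-convex if all its fibers $f^{-1}(y)$ are $\mathcal S$-convex, and $\mathcal S$-open if $f(X\setminus S)$ is open in $Y$ for every $S\in\mathcal S$. *)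

theory Defs
  imports "HOL-Analysis.Analysis"
begin

definition Tychonoff_space :: "'a topology \<Rightarrow> bool" where
  "Tychonoff_space X \<longleftrightarrow> completely_regular_space X \<and> t1_space X"

definition closed_subbase :: "'a topology \<Rightarrow> 'a set set \<Rightarrow> bool" where
  "closed_subbase X \<S> \<longleftrightarrow> (\<forall>S\<in>\<S>. closedin X S) \<and>
     (\<forall>C. closedin X C \<longrightarrow>
        (\<exists>\<F>. C = topspace X \<inter> \<Inter>\<F> \<and>
              (\<forall>A\<in>\<F>. \<exists>\<G>. finite \<G> \<and> \<G> \<subseteq> \<S> \<and> A = \<Union>\<G>)))"

definition linked :: "'a set set \<Rightarrow> bool" where
  "linked \<L> \<longleftrightarrow> (\<forall>A\<in>\<L>. \<forall>B\<in>\<L>. A \<inter> B \<noteq> {})"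

definition binary_family :: "'a set set \<Rightarrow> bool" where
  "binary_family \<S> \<longleftrightarrow> (\<forall>\<L>. \<L> \<subseteq> \<S> \<and> \<L> \<noteq> {} \<and> linked \<L> \<longrightarrow> \<Inter>\<L> \<noteq> {})"

definition normal_family :: "'a topology \<Rightarrow> 'a set set \<Rightarrow> bool" where
  "normal_family X \<S> \<longleftrightarrow> (\<forall>S0\<in>\<S>. \<forall>S1\<in>\<S>. S0 \<inter> S1 = {} \<longrightarrow>
     (\<exists>T0\<in>\<S>. \<exists>T1\<in>\<S>. S0 \<inter> T1 = {} \<and> T0 \<inter> S1 = {} \<and> T0 \<union> T1 = topspace X))"

definition S_hull :: "'a topology \<Rightarrow> 'a set set \<Rightarrow> 'a set \<Rightarrow> 'a set" where
  "S_hull X \<S> B = topspace X \<inter> \<Inter>{S\<in>\<S>. B \<subseteq> S}"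

definition S_convex :: "'a topology \<Rightarrow> 'a set set \<Rightarrow> 'a set \<Rightarrow> bool" where
  "S_convex X \<S> B \<longleftrightarrow> (\<forall>x\<in>B. \<forall>y\<in>B. S_hull X \<S> {x, y} \<subseteq> B)"

definition S_convex_map :: "'a topology \<Rightarrow> 'a set set \<Rightarrow> 'b topology \<Rightarrow> ('a \<Rightarrow> 'b) \<Rightarrow> bool" where
  "S_convex_map X \<S> Y f \<longleftrightarrow>
     (\<forall>y\<in>topspace Y. S_convex X \<S> {x\<in>topspace X. f x = y})"

definition S_open_map :: "'a topology \<Rightarrow> 'a set set \<Rightarrow> 'b topology \<Rightarrow> ('a \<Rightarrow> 'b) \<Rightarrow> bool" where
  "S_open_map X \<S> Y f \<longleftrightarrow> (\<forall>S\<in>\<S>. openin Y (f ` (topspace X - S)))"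

end

theory Submission
  imports Defs
begin

lemma binary_compact:
  assumes cs: "closed_subbase X \<S>" and bin: "binary_family \<S>"
  shows "compact_space X"
proof -
  let ?U = "topspace X"
  define B where "B = insert ?U ((\<lambda>S. ?U - S) ` \<S>)"
  have clo: "\<And>S. S \<in> \<S> \<Longrightarrow> closedin X S" using cs unfolding closed_subbase_def by blast
  have Bopen: "\<And>V. V \<in> B \<Longrightarrow> openin X V" unfolding B_def using clo by auto
  have top: "topology (arbitrary union_of (finite intersection_of (\<lambda>x. x \<in> B) relative_to ?U)) = X"
    unfolding topology_eq
  proof (intro allI iffI)
    fix V assume "openin (topology (arbitrary union_of (finite intersection_of (\<lambda>x. x \<in> B) relative_to ?U))) V"
    then show "openin X V"
      using minimal_topology_subbase[of "\<lambda>x. x \<in> B" X ?U V] Bopen by auto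
  next
    fix V assume V: "openin X V"
    then have "closedin X (?U - V)" by auto
    then obtain \<F> where F: "?U - V = ?U \<inter> \<Inter>\<F>"
      and FG: "\<forall>A\<in>\<F>. \<exists>\<G>. finite \<G> \<and> \<G> \<subseteq> \<S> \<and> A = \<Union>\<G>"
      using cs unfolding closed_subbase_def by meson
    have Vsub: "V \<subseteq> ?U" using V openin_subset by blast
    have Veq: "V = \<Union>((\<lambda>A. ?U - A) ` \<F>)" using F Vsub by auto
    have each: "(finite intersection_of (\<lambda>x. x \<in> B) relative_to ?U) (?U - A)" if AF: "A \<in> \<F>" for A
    proof -
      obtain \<G> where G: "finite \<G>" "\<G> \<subseteq> \<S>" "A = \<Union>\<G>"
        using bspec[OF FG AF] by auto
      have sub: "(\<lambda>S. ?U - S) ` \<G> \<subseteq> Collect (\<lambda>x. x \<in> B)" using G(2) unfolding B_def by auto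
      have "(finite intersection_of (\<lambda>x. x \<in> B)) (\<Inter>((\<lambda>S. ?U - S) ` \<G>))"
        unfolding intersection_of_def using G(1) sub by blast
      moreover have "?U \<inter> \<Inter>((\<lambda>S. ?U - S) ` \<G>) = ?U - A" using G(3) by auto
      ultimately show ?thesis unfolding relative_to_def by blast
    qed
    show "openin (topology (arbitrary union_of (finite intersection_of (\<lambda>x. x \<in> B) relative_to ?U))) V"
      unfolding openin_subbase unfolding union_of_def arbitrary_def
    proof (intro exI conjI)
      show "(\<lambda>A. ?U - A) ` \<F> \<subseteq> Collect (finite intersection_of (\<lambda>x. x \<in> B) relative_to ?U)"
        using each by blast
      show "\<Union>((\<lambda>A. ?U - A) ` \<F>) = V" using Veq by simp
    qed simp
  qed
  show ?thesis
  proof (rule Alexander_subbase_alt[OF _ _ top])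
    show "?U \<subseteq> \<Union>B" unfolding B_def by auto
  next
    fix C assume C: "C \<subseteq> B" "?U \<subseteq> \<Union>C"
    show "\<exists>C'. finite C' \<and> C' \<subseteq> C \<and> ?U \<subseteq> \<Union>C'"
    proof (cases "?U \<in> C")
      case True then show ?thesis by (intro exI[of _ "{?U}"]) auto
    next
      case False
      define L where "L = {S \<in> \<S>. ?U - S \<in> C}"
      show ?thesis
      proof (rule ccontr)
        assume nf: "\<not> ?thesis"
        have lk: "linked L" unfolding linked_def
        proof (intro ballI)
          fix A1 A2 assume a: "A1 \<in> L" "A2 \<in> L"
          show "A1 \<inter> A2 \<noteq> {}"
          proof
            assume e: "A1 \<inter> A2 = {}"
            have "finite {?U - A1, ?U - A2} \<and> {?U - A1, ?U - A2} \<subseteq> C \<and> ?U \<subseteq> \<Union>{?U - A1, ?U - A2}"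
              using a e unfolding L_def by auto
            then show False using nf by blast
          qed
        qed
        have Lne: "L \<noteq> {}"
        proof
          assume "L = {}"
          then have "C = {}" using C False unfolding L_def B_def by auto
          then have "?U = {}" using C by auto
          then show False using nf by auto
        qed
        have LS: "L \<subseteq> \<S>" unfolding L_def by auto
        obtain x where x: "x \<in> \<Inter>L" using bin lk Lne LS unfolding binary_family_def by blast
        obtain S0 where "S0 \<in> L" using Lne by blast
        then have "x \<in> S0" using x by blast
        moreover have "S0 \<subseteq> ?U" using \<open>S0 \<in> L\<close> LS clo closedin_subset by blast
        ultimately have "x \<in> ?U" by blast
        then obtain V where "V \<in> C" "x \<in> V" using C by blast
        then obtain S where "S \<in> \<S>" "V = ?U - S" using C False unfolding B_def by auto
        then show False using x \<open>V \<in> C\<close> \<open>x \<in> V\<close> unfolding L_def by auto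
      qed
    qed
  qed
qed

lemma pt_sep:
  assumes cs: "closed_subbase X \<S>" and t1: "t1_space X"
    and p: "p \<in> topspace X" and q: "q \<in> topspace X" and pq: "p \<noteq> q"
  shows "\<exists>T\<in>\<S>. q \<in> T \<and> p \<notin> T"
proof -
  have "closedin X {q}" using t1_space_closedin_singleton[THEN iffD1, OF t1] q by blast
  then obtain \<F> where F: "{q} = topspace X \<inter> \<Inter>\<F>"
      and FG: "\<forall>A\<in>\<F>. \<exists>\<G>. finite \<G> \<and> \<G> \<subseteq> \<S> \<and> A = \<Union>\<G>"
    using cs unfolding closed_subbase_def by meson
  have "p \<notin> topspace X \<inter> \<Inter>\<F>" using F pq by blast
  then obtain A where A: "A \<in> \<F>" "p \<notin> A" using p by blast
  have qA: "q \<in> A" using F A(1) by blast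
  obtain \<G> where G: "\<G> \<subseteq> \<S>" "A = \<Union>\<G>" using bspec[OF FG A(1)] by auto
  then obtain T where "T \<in> \<G>" "q \<in> T" using qA by blast
  then show ?thesis using G A(2) by blast
qed

lemma sep:
  assumes cs: "closed_subbase X \<S>" and bin: "binary_family \<S>" and t1: "t1_space X"
    and p: "p \<in> topspace X" and T: "T \<in> \<S>" and pT: "p \<notin> T" and Tne: "T \<noteq> {}"
  shows "\<exists>S'\<in>\<S>. p \<in> S' \<and> S' \<inter> T = {}"
proof (rule ccontr)
  assume nf: "\<not> ?thesis"
  have meet: "\<And>S. S \<in> \<S> \<Longrightarrow> p \<in> S \<Longrightarrow> S \<inter> T \<noteq> {}" using nf by blast
  define M where "M = insert T {S\<in>\<S>. p \<in> S}"
  have lk: "linked M" unfolding linked_def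
  proof (intro ballI)
    fix A B assume A: "A \<in> M" and B: "B \<in> M"
    show "A \<inter> B \<noteq> {}"
    proof (cases "A = T")
      case True
      then show ?thesis
      proof (cases "B = T")
        case True then show ?thesis using \<open>A = T\<close> Tne by simp
      next
        case False then have "B \<in> \<S>" "p \<in> B" using B unfolding M_def by auto
        then show ?thesis using meet \<open>A = T\<close> by blast
      qed
    next
      case False then have "A \<in> \<S>" "p \<in> A" using A unfolding M_def by auto
      show ?thesis
      proof (cases "B = T")
        case True then show ?thesis using meet \<open>A \<in> \<S>\<close> \<open>p \<in> A\<close> by blast
      next
        case False then have "p \<in> B" using B unfolding M_def by auto
        then show ?thesis using \<open>p \<in> A\<close> by blast
      qed
    qed
  qed
  have MS: "M \<subseteq> \<S>" unfolding M_def using T by auto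
  have Mne: "M \<noteq> {}" unfolding M_def by auto
  have "\<Inter>M \<noteq> {}" using bin lk MS Mne unfolding binary_family_def by blast
  then obtain w where w: "w \<in> \<Inter>M" by blast
  have wT: "w \<in> T" using w unfolding M_def by blast
  have wX: "w \<in> topspace X" using wT T cs closedin_subset unfolding closed_subbase_def by blast
  have "p \<noteq> w" using wT pT by blast
  then obtain S where S: "S \<in> \<S>" "w \<notin> S" "p \<in> S"
    using pt_sep[OF cs t1 wX p] by blast
  then have "S \<in> M" unfolding M_def by blast
  then show False using w S(2) by blast
qed

lemma gate_fin:
  assumes bin: "binary_family \<S>" and clo: "\<And>S. S \<in> \<S> \<Longrightarrow> S \<subseteq> topspace X"
    and Fne: "F \<noteq> {}" and conv: "\<And>p q. p \<in> F \<Longrightarrow> q \<in> F \<Longrightarrow> S_hull X \<S> {p, q} \<subseteq> F"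
  shows "finite K \<Longrightarrow> K \<subseteq> \<S> \<Longrightarrow> (\<forall>S\<in>K. a \<in> S \<and> S \<inter> F \<noteq> {}) \<Longrightarrow> F \<inter> \<Inter>K \<noteq> {}"
proof (induction K rule: finite_psubset_induct)
  case (psubset K)
  show ?case
  proof (cases "\<exists>S1 S2. S1 \<in> K \<and> S2 \<in> K \<and> S1 \<noteq> S2")
    case False
    show ?thesis
    proof (cases "K = {}")
      case True then show ?thesis using Fne by simp
    next
      case False
      then obtain S where "S \<in> K" by blast
      then have "K = {S}" using \<open>\<not> (\<exists>S1 S2. S1 \<in> K \<and> S2 \<in> K \<and> S1 \<noteq> S2)\<close> by blast
      then show ?thesis using psubset.prems(2) by auto
    qed
  next
    case True
    then obtain S1 S2 where S12: "S1 \<in> K" "S2 \<in> K" "S1 \<noteq> S2" by blast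
    have "F \<inter> \<Inter>(K - {S1}) \<noteq> {}"
      using psubset.IH[of "K - {S1}"] S12 psubset.prems by blast
    then obtain q where q: "q \<in> F" "q \<in> \<Inter>(K - {S1})" by blast
    have "F \<inter> \<Inter>(K - {S2}) \<noteq> {}"
      using psubset.IH[of "K - {S2}"] S12 psubset.prems by blast
    then obtain p where p: "p \<in> F" "p \<in> \<Inter>(K - {S2})" by blast
    define M where "M = K \<union> {T\<in>\<S>. p \<in> T \<and> q \<in> T}"
    have lk: "linked M" unfolding linked_def
    proof (intro ballI)
      fix A B assume A: "A \<in> M" and B: "B \<in> M"
      have aK: "\<And>S. S \<in> K \<Longrightarrow> a \<in> S" using psubset.prems(2) by blast
      have mem: "\<And>S. S \<in> K \<Longrightarrow> p \<in> S \<or> q \<in> S" using p q S12(3) by blast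
      show "A \<inter> B \<noteq> {}"
      proof (cases "A \<in> K")
        case AK: True
        show ?thesis
        proof (cases "B \<in> K")
          case True then show ?thesis using AK aK by blast
        next
          case False then have "p \<in> B" "q \<in> B" using B unfolding M_def by auto
          then show ?thesis using mem[OF AK] by blast
        qed
      next
        case AK: False
        then have pA: "p \<in> A" "q \<in> A" using A unfolding M_def by auto
        show ?thesis
        proof (cases "B \<in> K")
          case True then show ?thesis using pA mem[OF True] by blast
        next
          case False then have "p \<in> B" using B unfolding M_def by auto
          then show ?thesis using pA by blast
        qed
      qed
    qed
    have "M \<subseteq> \<S>" using psubset.prems(1) unfolding M_def by auto
    moreover have "M \<noteq> {}" using S12 unfolding M_def by auto
    ultimately obtain z where z: "z \<in> \<Inter>M" using bin lk unfolding binary_family_def by blast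
    have zX: "z \<in> topspace X" using z S12(1) clo psubset.prems(1) unfolding M_def by blast
    have "z \<in> S_hull X \<S> {p, q}" unfolding S_hull_def using zX z unfolding M_def by auto
    then have "z \<in> F" using conv[OF p(1) q(1)] by blast
    moreover have "z \<in> \<Inter>K" using z unfolding M_def by blast
    ultimately show ?thesis by blast
  qed
qed

theorem corollary1p3:
  fixes X :: "'a topology" and Y :: "'b topology" and \<S> :: "'a set set"
    and f :: "'a \<Rightarrow> 'b"
  assumes "Tychonoff_space X" and "Tychonoff_space Y"
    and "closed_subbase X \<S>" and "binary_family \<S>" and "normal_family X \<S>"
    and "continuous_map X Y f" and "f ` topspace X = topspace Y"
    and "S_convex_map X \<S> Y f" and "S_open_map X \<S> Y f"
  shows "\<forall>(Z :: 'c topology) (g :: 'c \<Rightarrow> 'b).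
           Tychonoff_space Z \<and> continuous_map Z Y g \<longrightarrow>
           (\<exists>h. continuous_map Z X h \<and> (\<forall>z\<in>topspace Z. f (h z) = g z))"
proof (intro allI impI, elim conjE)
  fix Z :: "'c topology" and g :: "'c \<Rightarrow> 'b"
  assume gc: "continuous_map Z Y g"
  note cs = assms(3) and bin = assms(4) and nrm = assms(5) and fc = assms(6) and fs = assms(7)
  have gZ: "\<And>z. z \<in> topspace Z \<Longrightarrow> g z \<in> topspace Y"
    using gc unfolding continuous_map_def by auto
  show "\<exists>h. continuous_map Z X h \<and> (\<forall>z\<in>topspace Z. f (h z) = g z)"
  proof (cases "topspace Y = {}")
    case True
    then have "topspace Z = {}" using gZ by blast
    then have "continuous_map Z X (\<lambda>z. undefined)" unfolding continuous_map_def by simp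
    then show ?thesis using \<open>topspace Z = {}\<close> by blast
  next
    case False
    then have "topspace X \<noteq> {}" using fs False by (metis image_empty)
    then obtain a where a: "a \<in> topspace X" by blast
    have t1X: "t1_space X" using assms(1) unfolding Tychonoff_space_def by simp
    have t1Y: "t1_space Y" using assms(2) unfolding Tychonoff_space_def by simp
    have HY: "Hausdorff_space Y"
      using assms(2) completely_regular_imp_regular_space regular_t1_imp_Hausdorff_space
      unfolding Tychonoff_space_def by blast
    have comp: "compact_space X" using binary_compact[OF cs bin] .
    have cm: "closed_map X Y f"
      using continuous_imp_closed_map_gen[OF comp Hausdorff_imp_kc_space[OF HY] fc] .
    have closS: "\<And>S. S \<in> \<S> \<Longrightarrow> closedin X S" using cs unfolding closed_subbase_def by blast
    have subS: "\<And>S. S \<in> \<S> \<Longrightarrow> S \<subseteq> topspace X" using closS closedin_subset by blast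
    have fX: "\<And>x. x \<in> topspace X \<Longrightarrow> f x \<in> topspace Y"
      using fc unfolding continuous_map_def by auto
    define Fy where "Fy y = {x \<in> topspace X. f x = y}" for y
    define P where "P y p \<longleftrightarrow> p \<in> Fy y \<and> (\<forall>S\<in>\<S>. a \<in> S \<and> S \<inter> Fy y \<noteq> {} \<longrightarrow> p \<in> S)" for y p
    have Fcl: "closedin X (Fy y)" if y: "y \<in> topspace Y" for y
    proof -
      have "closedin Y {y}" using t1_space_closedin_singleton[THEN iffD1, OF t1Y] y by blast
      from closedin_continuous_map_preimage[OF fc this] show ?thesis
        unfolding Fy_def by simp
    qed
    have Fne: "Fy y \<noteq> {}" if y: "y \<in> topspace Y" for y
      using y fs unfolding Fy_def by (metis (mono_tags, lifting) empty_Collect_eq imageE)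
    have Fsub: "Fy y \<subseteq> topspace X" for y unfolding Fy_def by auto
    have Fconv: "\<And>p q. p \<in> Fy y \<Longrightarrow> q \<in> Fy y \<Longrightarrow> S_hull X \<S> {p, q} \<subseteq> Fy y"
      if y: "y \<in> topspace Y" for y
      using assms(8) y unfolding S_convex_map_def S_convex_def Fy_def by blast
    have gate_ex: "\<exists>p. P y p" if y: "y \<in> topspace Y" for y
    proof -
      define U where "U = insert (Fy y) {S \<in> \<S>. a \<in> S \<and> S \<inter> Fy y \<noteq> {}}"
      have Ucl: "\<forall>C\<in>U. closedin X C" unfolding U_def using Fcl[OF y] closS by blast
      have Ufin: "\<forall>\<F>. finite \<F> \<and> \<F> \<subseteq> U \<longrightarrow> \<Inter>\<F> \<noteq> {}"
      proof (intro allI impI)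
        fix \<F> assume F: "finite \<F> \<and> \<F> \<subseteq> U"
        define K where "K = \<F> - {Fy y}"
        have K: "finite K" "K \<subseteq> \<S>" "\<forall>S\<in>K. a \<in> S \<and> S \<inter> Fy y \<noteq> {}"
          using F unfolding K_def U_def by auto
        have "Fy y \<inter> \<Inter>K \<noteq> {}"
          using gate_fin[OF bin subS Fne[OF y] Fconv[OF y] K] by blast
        moreover have "Fy y \<inter> \<Inter>K \<subseteq> \<Inter>\<F>" unfolding K_def by blast
        ultimately show "\<Inter>\<F> \<noteq> {}" by blast
      qed
      have "\<Inter>U \<noteq> {}" using comp Ucl Ufin unfolding compact_space_fip by blast
      then obtain p where p: "p \<in> \<Inter>U" by blast
      have "P y p" unfolding P_def
      proof (intro conjI ballI impI)
        show "p \<in> Fy y" using p unfolding U_def by blast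
        fix S assume "S \<in> \<S>" "a \<in> S \<and> S \<inter> Fy y \<noteq> {}"
        then show "p \<in> S" using p unfolding U_def by blast
      qed
      then show ?thesis by blast
    qed
    have gate_un: "p = q" if y: "y \<in> topspace Y" and Pp: "P y p" and Pq: "P y q" for y p q
    proof (rule ccontr)
      assume pq: "p \<noteq> q"
      have pF: "p \<in> Fy y" and qF: "q \<in> Fy y" using Pp Pq unfolding P_def by auto
      have pX: "p \<in> topspace X" and qX: "q \<in> topspace X" using pF qF Fsub by auto
      obtain T where T: "T \<in> \<S>" "q \<in> T" "p \<notin> T" using pt_sep[OF cs t1X pX qX pq] by blast
      obtain S' where S': "S' \<in> \<S>" "p \<in> S'" "S' \<inter> T = {}"
        using sep[OF cs bin t1X pX T(1) T(3)] T(2) by blast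
      obtain T0 T1 where TT: "T0 \<in> \<S>" "T1 \<in> \<S>" "S' \<inter> T1 = {}" "T0 \<inter> T = {}"
          "T0 \<union> T1 = topspace X"
        using nrm S'(1) T(1) S'(3) unfolding normal_family_def by metis
      have qT1: "q \<in> T1" using TT(4,5) T(2) qX by blast
      have pT0: "p \<in> T0" using TT(3,5) S'(2) pX by blast
      have "a \<in> T0 \<or> a \<in> T1" using TT(5) a by blast
      then show False
      proof
        assume "a \<in> T0"
        then have "q \<in> T0" using Pq TT(1) pT0 pF unfolding P_def by blast
        then show False using TT(4) T(2) by blast
      next
        assume "a \<in> T1"
        then have "p \<in> T1" using Pp TT(2) qT1 qF unfolding P_def by blast
        then show False using TT(3) S'(2) by blast
      qed
    qed
    define s where "s y = (THE p. P y p)" for y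
    have sP: "P y (s y)" if y: "y \<in> topspace Y" for y
    proof -
      have "\<exists>!p. P y p" using gate_ex[OF y] gate_un[OF y] by blast
      then show ?thesis unfolding s_def by (rule theI')
    qed
    have sF: "s y \<in> Fy y" if y: "y \<in> topspace Y" for y using sP[OF y] unfolding P_def by blast
    have sX: "s y \<in> topspace X" if y: "y \<in> topspace Y" for y using sF[OF y] Fsub by blast
    have fs_eq: "f (s y) = y" if y: "y \<in> topspace Y" for y using sF[OF y] unfolding Fy_def by blast
    have sS: "s y \<in> S" if y: "y \<in> topspace Y" and S: "S \<in> \<S>" "a \<in> S" "S \<inter> Fy y \<noteq> {}" for y S
      using sP[OF y] S unfolding P_def by blast
    have LOC: "\<exists>W. openin Y W \<and> y \<in> W \<and> (\<forall>y'\<in>W. s y' \<notin> S)"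
      if y: "y \<in> topspace Y" and S: "S \<in> \<S>" and nS: "s y \<notin> S" for y S
    proof (cases "S = {}")
      case True then show ?thesis using y by (intro exI[of _ "topspace Y"]) auto
    next
      case False
      obtain S' where S': "S' \<in> \<S>" "s y \<in> S'" "S' \<inter> S = {}"
        using sep[OF cs bin t1X sX[OF y] S nS False] by blast
      obtain T0 T1 where TT: "T0 \<in> \<S>" "T1 \<in> \<S>" "S' \<inter> T1 = {}" "T0 \<inter> S = {}"
          "T0 \<union> T1 = topspace X"
        using nrm S'(1) S S'(3) unfolding normal_family_def by metis
      have ST1: "S \<subseteq> T1" using TT(4,5) subS[OF S] by blast
      have syT1: "s y \<notin> T1" using S'(2) TT(3) by blast
      have "a \<in> T0 \<or> a \<in> T1" using TT(5) a by blast
      then show ?thesis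
      proof
        assume aT1: "a \<in> T1"
        have emp: "T1 \<inter> Fy y = {}"
        proof (rule ccontr)
          assume "T1 \<inter> Fy y \<noteq> {}"
          then have "s y \<in> T1" using sS[OF y TT(2) aT1] by blast
          then show False using syT1 by blast
        qed
        define W where "W = topspace Y - f ` T1"
        have "closedin Y (f ` T1)" using cm closS[OF TT(2)] unfolding closed_map_def by blast
        then have "openin Y W" unfolding W_def by blast
        moreover have "y \<in> W"
        proof -
          have "y \<notin> f ` T1"
          proof
            assume "y \<in> f ` T1"
            then obtain x where x: "x \<in> T1" "f x = y" by blast
            then have "x \<in> Fy y" using subS[OF TT(2)] unfolding Fy_def by blast
            then show False using emp x(1) by blast
          qed
          then show ?thesis unfolding W_def using y by blast
        qed
        moreover have "\<forall>y'\<in>W. s y' \<notin> S"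
        proof
          fix y' assume y': "y' \<in> W"
          then have y'Y: "y' \<in> topspace Y" unfolding W_def by blast
          have "s y' \<notin> T1"
          proof
            assume "s y' \<in> T1"
            then have "f (s y') \<in> f ` T1" by blast
            then show False using y' fs_eq[OF y'Y] unfolding W_def by simp
          qed
          then show "s y' \<notin> S" using ST1 by blast
        qed
        ultimately show ?thesis by blast
      next
        assume aT0: "a \<in> T0"
        define W where "W = f ` (topspace X - T1)"
        have "openin Y W" using assms(9) TT(2) unfolding S_open_map_def W_def by blast
        moreover have "y \<in> W"
        proof -
          have "s y \<in> topspace X - T1" using sX[OF y] syT1 by blast
          then have "f (s y) \<in> W" unfolding W_def by blast
          then show ?thesis using fs_eq[OF y] by simp
        qed
        moreover have "\<forall>y'\<in>W. s y' \<notin> S"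
        proof
          fix y' assume y': "y' \<in> W"
          then obtain x where x: "x \<in> topspace X" "x \<notin> T1" "f x = y'" unfolding W_def by blast
          have y'Y: "y' \<in> topspace Y" using fX[OF x(1)] x(3) by simp
          have "x \<in> T0" using x(1,2) TT(5) by blast
          moreover have "x \<in> Fy y'" using x(1,3) unfolding Fy_def by blast
          ultimately have "T0 \<inter> Fy y' \<noteq> {}" by blast
          then have "s y' \<in> T0" using sS[OF y'Y TT(1) aT0] by blast
          then show "s y' \<notin> S" using TT(4) by blast
        qed
        ultimately show ?thesis by blast
      qed
    qed
    have scont: "continuous_map Y X s"
      unfolding continuous_map_def
    proof (intro conjI allI impI)
      show "s \<in> topspace Y \<rightarrow> topspace X" using sX by (simp add: Pi_iff)
      fix V assume V: "openin X V"
      show "openin Y {y \<in> topspace Y. s y \<in> V}"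
      proof (rule openin_subopen[THEN iffD2], intro ballI)
        fix y assume yV: "y \<in> {y \<in> topspace Y. s y \<in> V}"
        then have y: "y \<in> topspace Y" and syV: "s y \<in> V" by auto
        have "closedin X (topspace X - V)" using V by auto
        then obtain \<F> where F: "topspace X - V = topspace X \<inter> \<Inter>\<F>"
            and FG: "\<forall>A\<in>\<F>. \<exists>\<G>. finite \<G> \<and> \<G> \<subseteq> \<S> \<and> A = \<Union>\<G>"
          using cs unfolding closed_subbase_def by meson
        have "s y \<notin> topspace X \<inter> \<Inter>\<F>" using F syV by blast
        then obtain A where A: "A \<in> \<F>" "s y \<notin> A" using sX[OF y] by blast
        obtain \<G> where G: "finite \<G>" "\<G> \<subseteq> \<S>" "A = \<Union>\<G>" using bspec[OF FG A(1)] by auto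
        have "\<forall>S\<in>\<G>. \<exists>W. openin Y W \<and> y \<in> W \<and> (\<forall>y'\<in>W. s y' \<notin> S)"
        proof
          fix S assume "S \<in> \<G>"
          then show "\<exists>W. openin Y W \<and> y \<in> W \<and> (\<forall>y'\<in>W. s y' \<notin> S)"
            using LOC[OF y] G A(2) by blast
        qed
        then obtain Wf where Wf: "\<forall>S\<in>\<G>. openin Y (Wf S) \<and> y \<in> Wf S \<and> (\<forall>y'\<in>Wf S. s y' \<notin> S)"
          by metis
        define W where "W = topspace Y \<inter> \<Inter>(Wf ` \<G>)"
        have "openin Y W" unfolding W_def
          using openin_Int_Inter[of "Wf ` \<G>" Y "topspace Y"] G(1) Wf by auto
        moreover have "y \<in> W" unfolding W_def using y Wf by blast
        moreover have "W \<subseteq> {y \<in> topspace Y. s y \<in> V}"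
        proof
          fix y' assume y': "y' \<in> W"
          then have y'Y: "y' \<in> topspace Y" unfolding W_def by blast
          have "\<forall>S\<in>\<G>. s y' \<notin> S" using y' Wf unfolding W_def by blast
          then have "s y' \<notin> A" using G(3) by blast
          then have "s y' \<notin> topspace X - V" using F A(1) by blast
          then show "y' \<in> {y \<in> topspace Y. s y \<in> V}" using sX[OF y'Y] y'Y by blast
        qed
        ultimately show "\<exists>T. openin Y T \<and> y \<in> T \<and> T \<subseteq> {y \<in> topspace Y. s y \<in> V}" by blast
      qed
    qed
    show ?thesis
    proof (intro exI conjI ballI)
      show "continuous_map Z X (s \<circ> g)" using continuous_map_compose[OF gc scont] .
      fix z assume "z \<in> topspace Z"
      then show "f ((s \<circ> g) z) = g z" using fs_eq[OF gZ] by simp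
    qed
  qed
qed

end
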